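(* Let $G$ be a group with a gliding system and $\mathcal{D}\subset G$. The glide complex $X_{\mathcal{D}}$ is nonpositively curved if and only if $\mathcal{D}$ is regular and satisfies the cube condition.
   Context: Gliding system $(\mathcal{G},\mathcal{I})$ in $G$: $\mathcal{G}\subset G\setminus\{1\}$ closed under inversion (glides), $\mathcal{I}\subset\mathcal{G}\times\mathcal{G}$ (independence) with $(s^{-1},t),(t,s)\in\mathcal{I}$ and $st=ts\ne1$ whenever $(s,t)\in\mathcal{I}$. Pre-cubic set: finite set $S$ of pairwise independent glides, $[S]=\prod_{s\in S}s$; cubic: pre-cubic with $[T_1]\ne[T_2]$ for distinct $T_1,T_2\subset S$. Glide complex $X_G$: cubed complex with one $k$-cube for each equivalence class of based cubes $(A,S)$ ($A\in G$, $S$ cubic of size $k$) under $(A,S)\sim([T]A,(S\setminus T)\cup\{t^{-1}:t\in T\})$, $T\subset S$; vertices of the cube are $[T]A$ ($T\subset S$), faces are cubes of $(A,S')$, $S'\subset S$; 0-skeleton $G$. $X_{\mathcal{D}}$: subcomplex of cubes all of whose vertices lie in $\mathcal{D}$. $\mathcal{D}$ is regular if for every $A\in\mathcal{D}$ every pre-cubic $S$ with $sA\in\mathcal{D}$ ($s\in S$) and $stA\in\mathcal{D}$ (distinct $s,t\in S$) is cubic. $\mathcal{D}$ satisfies the cube condition if for every $A\in\mathcal{D}$ and pairwise independent glides $s_1,s_2,s_3$ with $s_1A,s_2A,s_3A,s_1s_2A,s_1s_3A,s_2s_3A\in\mathcal{D}$ one has $s_1s_2s_3A\in\mathcal{D}$.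 A cubed complex is nonpositively curved if the link of every $0$-cell is a simplicial complex and is a flag complex. *)

theory Defs
  imports "HOL-Algebra.Group"
begin

type_synonym 'g bcube = "'g \<times> 'g set"

definition gliding_system :: "('g,'b) monoid_scheme \<Rightarrow> 'g set \<Rightarrow> ('g \<times> 'g) set \<Rightarrow> bool" where
  "gliding_system G Gl Ind \<longleftrightarrow>
     group G \<and> Gl \<subseteq> carrier G - {\<one>\<^bsub>G\<^esub>} \<and> (\<forall>s\<in>Gl. inv\<^bsub>G\<^esub> s \<in> Gl) \<and>
     Ind \<subseteq> Gl \<times> Gl \<and>
     (\<forall>s t. (s, t) \<in> Ind \<longrightarrow>
        (inv\<^bsub>G\<^esub> s, t) \<in> Ind \<and> (t, s) \<in> Ind \<and>
        s \<otimes>\<^bsub>G\<^esub> t = t \<otimes>\<^bsub>G\<^esub> s \<and> s \<otimes>\<^bsub>G\<^esub> t \<noteq> \<one>\<^bsub>G\<^esub>)"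

text \<open>The product [S] of a finite set of pairwise commuting elements
  (taken in any enumeration order).\<close>
definition glide_prod :: "('g,'b) monoid_scheme \<Rightarrow> 'g set \<Rightarrow> 'g" where
  "glide_prod G S = (SOME p. \<exists>xs. distinct xs \<and> set xs = S \<and>
      p = foldr (\<lambda>x y. x \<otimes>\<^bsub>G\<^esub> y) xs \<one>\<^bsub>G\<^esub>)"

definition pre_cubic :: "('g,'b) monoid_scheme \<Rightarrow> 'g set \<Rightarrow> ('g \<times> 'g) set \<Rightarrow> 'g set \<Rightarrow> bool" where
  "pre_cubic G Gl Ind S \<longleftrightarrow> finite S \<and> S \<subseteq> Gl \<and> (\<forall>s\<in>S. \<forall>t\<in>S. s \<noteq> t \<longrightarrow> (s, t) \<in> Ind)"

definition cubic :: "('g,'b) monoid_scheme \<Rightarrow> 'g set \<Rightarrow> ('g \<times> 'g) set \<Rightarrow> 'g set \<Rightarrow> bool" where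
  "cubic G Gl Ind S \<longleftrightarrow> pre_cubic G Gl Ind S \<and> inj_on (glide_prod G) (Pow S)"

definition based_cube :: "('g,'b) monoid_scheme \<Rightarrow> 'g set \<Rightarrow> ('g \<times> 'g) set \<Rightarrow> 'g bcube \<Rightarrow> bool" where
  "based_cube G Gl Ind c \<longleftrightarrow> fst c \<in> carrier G \<and> cubic G Gl Ind (snd c)"

definition flip_set :: "('g,'b) monoid_scheme \<Rightarrow> 'g set \<Rightarrow> 'g set \<Rightarrow> 'g set" where
  "flip_set G T S = (S - T) \<union> (\<lambda>t. inv\<^bsub>G\<^esub> t) ` T"

definition cube_rel :: "('g,'b) monoid_scheme \<Rightarrow> 'g bcube \<Rightarrow> 'g bcube \<Rightarrow> bool" where
  "cube_rel G c d \<longleftrightarrow> (\<exists>T \<subseteq> snd c. fst d = glide_prod G T \<otimes>\<^bsub>G\<^esub> fst c \<and> snd d = flip_set G T (snd c))"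

text \<open>The cube of the glide complex determined by a based cube: its equivalence class.\<close>
definition cube_of :: "('g,'b) monoid_scheme \<Rightarrow> 'g set \<Rightarrow> ('g \<times> 'g) set \<Rightarrow> 'g bcube \<Rightarrow> 'g bcube set" where
  "cube_of G Gl Ind c = {d. based_cube G Gl Ind d \<and> cube_rel G c d}"

definition cube_vertices :: "('g,'b) monoid_scheme \<Rightarrow> 'g bcube \<Rightarrow> 'g set" where
  "cube_vertices G c = {glide_prod G T \<otimes>\<^bsub>G\<^esub> fst c | T. T \<subseteq> snd c}"

definition glide_complex :: "('g,'b) monoid_scheme \<Rightarrow> 'g set \<Rightarrow> ('g \<times> 'g) set \<Rightarrow> 'g set \<Rightarrow> 'g bcube set set" where
  "glide_complex G Gl Ind D =
     {cube_of G Gl Ind c | c. based_cube G Gl Ind c \<and> cube_vertices G c \<subseteq> D}"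

text \<open>A cell of the link of the vertex A is a corner at A of a positive-dimensional
  cube C of X_D; corners of C are exactly its based representatives (B,S) \<in> C,
  the corner being at vertex B.  A k-cube gives a (k-1)-simplex.\<close>
definition link_cells :: "('g,'b) monoid_scheme \<Rightarrow> 'g set \<Rightarrow> ('g \<times> 'g) set \<Rightarrow> 'g set \<Rightarrow> 'g
    \<Rightarrow> ('g bcube set \<times> 'g bcube) set" where
  "link_cells G Gl Ind D A =
     {(C, (B, S)) | C B S. C \<in> glide_complex G Gl Ind D \<and> (B, S) \<in> C \<and> B = A \<and> S \<noteq> {}}"

definition link_dim :: "('g bcube set \<times> 'g bcube) \<Rightarrow> nat" where
  "link_dim c = card (snd (snd c)) - 1"

text \<open>Face relation in the link: the corner at A of the face (A,S') of the cube (A,S).\<close>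
definition link_face :: "('g,'b) monoid_scheme \<Rightarrow> 'g set \<Rightarrow> ('g \<times> 'g) set
    \<Rightarrow> ('g bcube set \<times> 'g bcube) \<Rightarrow> ('g bcube set \<times> 'g bcube) \<Rightarrow> bool" where
  "link_face G Gl Ind c d \<longleftrightarrow>
     fst (snd c) = fst (snd d) \<and> snd (snd c) \<subseteq> snd (snd d) \<and> fst c = cube_of G Gl Ind (snd c)"

definition link_vertset :: "('g,'b) monoid_scheme \<Rightarrow> 'g set \<Rightarrow> ('g \<times> 'g) set \<Rightarrow> 'g set \<Rightarrow> 'g
    \<Rightarrow> ('g bcube set \<times> 'g bcube) \<Rightarrow> ('g bcube set \<times> 'g bcube) set" where
  "link_vertset G Gl Ind D A c =
     {v \<in> link_cells G Gl Ind D A. link_dim v = 0 \<and> link_face G Gl Ind v c}"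

definition link_simplicial :: "('g,'b) monoid_scheme \<Rightarrow> 'g set \<Rightarrow> ('g \<times> 'g) set \<Rightarrow> 'g set \<Rightarrow> 'g \<Rightarrow> bool" where
  "link_simplicial G Gl Ind D A \<longleftrightarrow>
     (let L = link_cells G Gl Ind D A; V = link_vertset G Gl Ind D A in
       (\<forall>c\<in>L. card (V c) = link_dim c + 1) \<and> inj_on V L \<and>
       (\<forall>c\<in>L. \<forall>d\<in>L. V c \<inter> V d \<noteq> {} \<longrightarrow>
          (\<exists>e\<in>L. link_face G Gl Ind e c \<and> link_face G Gl Ind e d \<and> V e = V c \<inter> V d)))"

definition link_flag :: "('g,'b) monoid_scheme \<Rightarrow> 'g set \<Rightarrow> ('g \<times> 'g) set \<Rightarrow> 'g set \<Rightarrow> 'g \<Rightarrow> bool" where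
  "link_flag G Gl Ind D A \<longleftrightarrow>
     (let L = link_cells G Gl Ind D A; V = link_vertset G Gl Ind D A in
       \<forall>W. finite W \<and> W \<noteq> {} \<and> W \<subseteq> {v \<in> L. link_dim v = 0} \<and>
           (\<forall>v\<in>W. \<forall>w\<in>W. v \<noteq> w \<longrightarrow> (\<exists>e\<in>L. V e = {v, w}))
         \<longrightarrow> (\<exists>c\<in>L. V c = W))"

text \<open>The 0-cells of X_D are the elements of D (0-cubes (A,{}) ).\<close>
definition nonpositively_curved :: "('g,'b) monoid_scheme \<Rightarrow> 'g set \<Rightarrow> ('g \<times> 'g) set \<Rightarrow> 'g set \<Rightarrow> bool" where
  "nonpositively_curved G Gl Ind D \<longleftrightarrow>
     (\<forall>A\<in>D. link_simplicial G Gl Ind D A \<and> link_flag G Gl Ind D A)"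

definition regular :: "('g,'b) monoid_scheme \<Rightarrow> 'g set \<Rightarrow> ('g \<times> 'g) set \<Rightarrow> 'g set \<Rightarrow> bool" where
  "regular G Gl Ind D \<longleftrightarrow>
     (\<forall>A\<in>D. \<forall>S. pre_cubic G Gl Ind S \<and> (\<forall>s\<in>S. s \<otimes>\<^bsub>G\<^esub> A \<in> D) \<and>
        (\<forall>s\<in>S. \<forall>t\<in>S. s \<noteq> t \<longrightarrow> s \<otimes>\<^bsub>G\<^esub> t \<otimes>\<^bsub>G\<^esub> A \<in> D)
        \<longrightarrow> cubic G Gl Ind S)"

definition cube_condition :: "('g,'b) monoid_scheme \<Rightarrow> 'g set \<Rightarrow> ('g \<times> 'g) set \<Rightarrow> 'g set \<Rightarrow> bool" where
  "cube_condition G Gl Ind D \<longleftrightarrow>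
     (\<forall>A\<in>D. \<forall>s1 s2 s3. (s1, s2) \<in> Ind \<and> (s1, s3) \<in> Ind \<and> (s2, s3) \<in> Ind \<and>
        s1 \<otimes>\<^bsub>G\<^esub> A \<in> D \<and> s2 \<otimes>\<^bsub>G\<^esub> A \<in> D \<and> s3 \<otimes>\<^bsub>G\<^esub> A \<in> D \<and>
        s1 \<otimes>\<^bsub>G\<^esub> s2 \<otimes>\<^bsub>G\<^esub> A \<in> D \<and> s1 \<otimes>\<^bsub>G\<^esub> s3 \<otimes>\<^bsub>G\<^esub> A \<in> D \<and>
        s2 \<otimes>\<^bsub>G\<^esub> s3 \<otimes>\<^bsub>G\<^esub> A \<in> D
        \<longrightarrow> s1 \<otimes>\<^bsub>G\<^esub> s2 \<otimes>\<^bsub>G\<^esub> s3 \<otimes>\<^bsub>G\<^esub> A \<in> D)"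

end

theory Submission imports Defs begin

locale glsys = group G for G :: "('g,'b) monoid_scheme" (structure) +
  fixes Gl :: "'g set" and Ind :: "('g \<times> 'g) set"
  assumes gs: "gliding_system G Gl Ind"
begin

lemma inv_cancel_l[simp]: "x \<in> carrier G \<Longrightarrow> y \<in> carrier G \<Longrightarrow> inv x \<otimes> (x \<otimes> y) = y"
  by (simp add: m_assoc[symmetric])
lemma inv_cancel_l'[simp]: "x \<in> carrier G \<Longrightarrow> y \<in> carrier G \<Longrightarrow> x \<otimes> (inv x \<otimes> y) = y"
  by (simp add: m_assoc[symmetric])

definition lp :: "'g list \<Rightarrow> 'g" where "lp xs = foldr (\<lambda>x y. x \<otimes> y) xs \<one>"

lemma lp_Nil[simp]: "lp [] = \<one>" by (simp add: lp_def)
lemma lp_Cons[simp]: "lp (x#xs) = x \<otimes> lp xs" by (simp add: lp_def)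

lemma lp_closed[simp]: "set xs \<subseteq> carrier G \<Longrightarrow> lp xs \<in> carrier G"
  by (induction xs) auto

lemma lp_append: "set xs \<subseteq> carrier G \<Longrightarrow> set ys \<subseteq> carrier G \<Longrightarrow> lp (xs@ys) = lp xs \<otimes> lp ys"
  by (induction xs) (auto simp: m_assoc)

lemma comm_lp: "x \<in> carrier G \<Longrightarrow> set xs \<subseteq> carrier G \<Longrightarrow> \<forall>y\<in>set xs. x \<otimes> y = y \<otimes> x
   \<Longrightarrow> x \<otimes> lp xs = lp xs \<otimes> x"
proof (induction xs)
  case (Cons y xs)
  have c: "y \<in> carrier G" "set xs \<subseteq> carrier G" using Cons.prems by auto
  have xy: "x \<otimes> y = y \<otimes> x" using Cons.prems by auto
  have ih: "x \<otimes> lp xs = lp xs \<otimes> x" using Cons by auto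
  have "x \<otimes> (y \<otimes> lp xs) = (x \<otimes> y) \<otimes> lp xs" using c Cons.prems(1) by (simp add: m_assoc)
  also have "\<dots> = (y \<otimes> x) \<otimes> lp xs" using xy by simp
  also have "\<dots> = y \<otimes> (x \<otimes> lp xs)" using c Cons.prems(1) by (simp add: m_assoc)
  also have "\<dots> = y \<otimes> (lp xs \<otimes> x)" using ih by simp
  also have "\<dots> = (y \<otimes> lp xs) \<otimes> x" using c Cons.prems(1) by (simp add: m_assoc)
  finally show ?case by simp
qed simp

definition commset :: "'g set \<Rightarrow> bool" where
  "commset X \<longleftrightarrow> X \<subseteq> carrier G \<and> (\<forall>x\<in>X. \<forall>y\<in>X. x \<otimes> y = y \<otimes> x)"

lemma commset_subset: "commset X \<Longrightarrow> Y \<subseteq> X \<Longrightarrow> commset Y"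
  unfolding commset_def by blast

lemma lp_perm: "distinct xs \<Longrightarrow> distinct ys \<Longrightarrow> set xs = set ys \<Longrightarrow> commset (set xs) \<Longrightarrow> lp xs = lp ys"
proof (induction xs arbitrary: ys)
  case Nil then show ?case by simp
next
  case (Cons x xs)
  have "x \<in> set ys" using Cons.prems(3) by auto
  then obtain ys1 ys2 where ys: "ys = ys1 @ x # ys2" by (meson split_list)
  have d: "distinct (ys1 @ ys2)" using Cons.prems(2) ys by simp
  have m: "set xs = set (ys1 @ ys2)" using Cons.prems(1,2,3) ys by auto
  have sy: "set ys = set (x#xs)" using Cons.prems(3) by simp
  have cs: "commset (set xs)" using Cons.prems(4) by (rule commset_subset) auto
  have ih: "lp xs = lp (ys1 @ ys2)" using Cons.IH[OF _ d m cs] Cons.prems(1) by simp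
  have c: "set ys \<subseteq> carrier G" "x \<in> carrier G" using Cons.prems(4) sy by (auto simp: commset_def)
  then have c1: "set ys1 \<subseteq> carrier G" "set ys2 \<subseteq> carrier G" using ys by auto
  have xc: "x \<otimes> lp ys1 = lp ys1 \<otimes> x"
    apply (rule comm_lp) using c c1 Cons.prems(4) sy ys unfolding commset_def by auto
  have "lp ys = lp ys1 \<otimes> (x \<otimes> lp ys2)" using ys c1 c by (simp add: lp_append)
  also have "\<dots> = (lp ys1 \<otimes> x) \<otimes> lp ys2" using c c1 by (simp add: m_assoc)
  also have "\<dots> = (x \<otimes> lp ys1) \<otimes> lp ys2" using xc by simp
  also have "\<dots> = x \<otimes> lp (ys1 @ ys2)" using c c1 by (simp add: m_assoc lp_append)
  finally show ?case using ih by simp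
qed

lemma gp_ex: "finite X \<Longrightarrow> \<exists>xs. distinct xs \<and> set xs = X \<and> glide_prod G X = lp xs"
proof -
  assume "finite X"
  then obtain xs where "distinct xs" "set xs = X" using finite_distinct_list by blast
  then have "\<exists>p xs. distinct xs \<and> set xs = X \<and> p = lp xs" by blast
  then have "\<exists>xs. distinct xs \<and> set xs = X \<and> (SOME p. \<exists>xs. distinct xs \<and> set xs = X \<and> p = lp xs) = lp xs"
    by (rule someI_ex[where P="\<lambda>p. \<exists>xs. distinct xs \<and> set xs = X \<and> p = lp xs"])
  then show ?thesis unfolding glide_prod_def lp_def by simp
qed

lemma gp_closed[simp]: "finite X \<Longrightarrow> X \<subseteq> carrier G \<Longrightarrow> glide_prod G X \<in> carrier G"
proof -
  assume f: "finite X" and c: "X \<subseteq> carrier G"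
  obtain xs where "distinct xs" "set xs = X" "glide_prod G X = lp xs" using gp_ex[OF f] by blast
  then show ?thesis using c by simp
qed

lemma gp_eq: "distinct xs \<Longrightarrow> commset (set xs) \<Longrightarrow> glide_prod G (set xs) = lp xs"
proof -
  assume d: "distinct xs" and c: "commset (set xs)"
  obtain ys where ys: "distinct ys" "set ys = set xs" "glide_prod G (set xs) = lp ys"
    using gp_ex[of "set xs"] by blast
  show ?thesis using lp_perm[of ys xs] ys c d by simp
qed

lemma gp_empty[simp]: "glide_prod G {} = \<one>"
proof -
  have "commset (set [])" by (simp add: commset_def)
  then show ?thesis using gp_eq[of "[]"] by simp
qed

lemma gp_single[simp]: "s \<in> carrier G \<Longrightarrow> glide_prod G {s} = s"
proof -
  assume s: "s \<in> carrier G"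
  have "commset (set [s])" using s by (simp add: commset_def)
  then show ?thesis using gp_eq[of "[s]"] s by simp
qed

lemma gp_pair: "s \<noteq> t \<Longrightarrow> s \<in> carrier G \<Longrightarrow> t \<in> carrier G \<Longrightarrow> s \<otimes> t = t \<otimes> s \<Longrightarrow> glide_prod G {s,t} = s \<otimes> t"
proof -
  assume a: "s \<noteq> t" "s \<in> carrier G" "t \<in> carrier G" "s \<otimes> t = t \<otimes> s"
  have "commset (set [s,t])" using a unfolding commset_def by auto
  then show ?thesis using gp_eq[of "[s,t]"] a by simp
qed

lemma gp_triple: "distinct [s,t,u] \<Longrightarrow> commset {s,t,u} \<Longrightarrow> glide_prod G {s,t,u} = s \<otimes> t \<otimes> u"
proof -
  assume a: "distinct [s,t,u]" "commset {s,t,u}"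
  then have c: "s \<in> carrier G" "t \<in> carrier G" "u \<in> carrier G" unfolding commset_def by auto
  have "glide_prod G (set [s,t,u]) = lp [s,t,u]" using gp_eq[of "[s,t,u]"] a by simp
  then show ?thesis using c by (simp add: m_assoc)
qed

lemma gp_union: "finite X \<Longrightarrow> finite Y \<Longrightarrow> X \<inter> Y = {} \<Longrightarrow> commset (X \<union> Y) \<Longrightarrow>
   glide_prod G (X \<union> Y) = glide_prod G X \<otimes> glide_prod G Y"
proof -
  assume f: "finite X" "finite Y" and d: "X \<inter> Y = {}" and c: "commset (X \<union> Y)"
  obtain xs ys where xs: "distinct xs" "set xs = X" "distinct ys" "set ys = Y"
    using f finite_distinct_list by metis
  have cx: "commset X" "commset Y" using c commset_subset by blast+
  have XY: "X \<subseteq> carrier G" "Y \<subseteq> carrier G" using c unfolding commset_def by blast+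
  have dd: "distinct (xs @ ys)" using xs d by auto
  have "glide_prod G (X \<union> Y) = glide_prod G (set (xs@ys))" using xs by simp
  also have "\<dots> = lp (xs @ ys)" using gp_eq[OF dd] c xs by simp
  also have "\<dots> = lp xs \<otimes> lp ys" using lp_append xs XY by simp
  also have "\<dots> = glide_prod G X \<otimes> glide_prod G Y" using gp_eq xs cx by metis
  finally show ?thesis .
qed

lemma lp_inv: "commset (set xs) \<Longrightarrow> lp (map (\<lambda>x. inv x) xs) = inv (lp xs)"
proof (induction xs)
  case (Cons x xs)
  have cs: "commset (set xs)" using Cons.prems by (rule commset_subset) auto
  have c: "x \<in> carrier G" "set xs \<subseteq> carrier G" using Cons.prems unfolding commset_def by auto
  have cc: "\<forall>y\<in>set xs. x \<otimes> y = y \<otimes> x" using Cons.prems unfolding commset_def by (meson list.set_intros)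
  have xc: "x \<otimes> lp xs = lp xs \<otimes> x" using comm_lp[OF c cc] .
  have "lp (map (\<lambda>x. inv x) (x#xs)) = inv x \<otimes> inv (lp xs)" using Cons.IH cs by simp
  also have "\<dots> = inv (lp xs \<otimes> x)" using c by (simp add: inv_mult_group)
  finally show ?case using xc by simp
qed simp

lemma inv_inj: "inj_on (\<lambda>x. inv x) (carrier G)" by (rule inj_onI) (metis inv_inv)

lemma gp_inv: "finite X \<Longrightarrow> commset X \<Longrightarrow> glide_prod G ((\<lambda>x. inv x) ` X) = inv (glide_prod G X)"
proof -
  assume f: "finite X" and c: "commset X"
  obtain xs where xs: "distinct xs" "set xs = X" using f finite_distinct_list by metis
  have Xc: "X \<subseteq> carrier G" using c by (simp add: commset_def)
  have d: "distinct (map (\<lambda>x. inv x) xs)" using xs Xc inv_inj by (simp add: distinct_map inj_on_subset)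
  have ci: "commset ((\<lambda>x. inv x) ` X)" unfolding commset_def
  proof (intro conjI ballI)
    show "(\<lambda>x. inv x) ` X \<subseteq> carrier G" using Xc by auto
    fix a b assume "a \<in> (\<lambda>x. inv x) ` X" "b \<in> (\<lambda>x. inv x) ` X"
    then obtain x y where xy: "x \<in> X" "y \<in> X" "a = inv x" "b = inv y" by blast
    then have "x \<otimes> y = y \<otimes> x" "x \<in> carrier G" "y \<in> carrier G" using c Xc unfolding commset_def by auto
    then show "a \<otimes> b = b \<otimes> a" using xy by (metis inv_mult_group)
  qed
  have "glide_prod G ((\<lambda>x. inv x) ` X) = glide_prod G (set (map (\<lambda>x. inv x) xs))" using xs by simp
  also have "\<dots> = lp (map (\<lambda>x. inv x) xs)" using gp_eq[OF d] ci xs by simp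
  also have "\<dots> = inv (lp xs)" using lp_inv c xs by simp
  moreover have "glide_prod G X = lp xs" using gp_eq[OF xs(1)] c xs(2) by simp
  ultimately show ?thesis by simp
qed


lemma gsD: "Gl \<subseteq> carrier G - {\<one>}" "\<And>s. s \<in> Gl \<Longrightarrow> inv s \<in> Gl" "Ind \<subseteq> Gl \<times> Gl"
  "\<And>s t. (s, t) \<in> Ind \<Longrightarrow> (inv s, t) \<in> Ind \<and> (t, s) \<in> Ind \<and> s \<otimes> t = t \<otimes> s \<and> s \<otimes> t \<noteq> \<one>"
  using gs unfolding gliding_system_def by auto

lemma Gl_carrier: "s \<in> Gl \<Longrightarrow> s \<in> carrier G" using gsD(1) by blast
lemma Gl_ne1: "s \<in> Gl \<Longrightarrow> s \<noteq> \<one>" using gsD(1) by blast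

lemma indD: assumes "(s,t) \<in> Ind"
  shows "s \<in> Gl" "t \<in> Gl" "(inv s, t) \<in> Ind" "(t, s) \<in> Ind" "s \<otimes> t = t \<otimes> s" "s \<otimes> t \<noteq> \<one>"
    "(s, inv t) \<in> Ind" "s \<noteq> t" "s \<noteq> inv t" "s \<in> carrier G" "t \<in> carrier G"
proof -
  show 1: "s \<in> Gl" "t \<in> Gl" using assms gsD(3) by auto
  show 2: "(inv s, t) \<in> Ind" "(t, s) \<in> Ind" "s \<otimes> t = t \<otimes> s" "s \<otimes> t \<noteq> \<one>"
    using gsD(4)[OF assms] by auto
  show "(s, inv t) \<in> Ind" using gsD(4) 2 by blast
  show "s \<in> carrier G" "t \<in> carrier G" using 1 Gl_carrier by auto
  show "s \<noteq> t"
  proof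
    assume st: "s = t"
    have "inv s \<otimes> t \<noteq> \<one>" using gsD(4)[OF 2(1)] by blast
    then show False using st \<open>t \<in> carrier G\<close> by simp
  qed
  show "s \<noteq> inv t" using 2(4) \<open>t \<in> carrier G\<close> by auto
qed

lemma pcD: assumes "pre_cubic G Gl Ind S"
  shows "finite S" "S \<subseteq> Gl" "S \<subseteq> carrier G" "\<And>s t. s \<in> S \<Longrightarrow> t \<in> S \<Longrightarrow> s \<noteq> t \<Longrightarrow> (s,t) \<in> Ind"
    "\<And>s t. s \<in> S \<Longrightarrow> t \<in> S \<Longrightarrow> s = inv t \<Longrightarrow> s = t"
proof -
  show f: "finite S" "S \<subseteq> Gl" "S \<subseteq> carrier G" using assms Gl_carrier unfolding pre_cubic_def by auto
  show p: "\<And>s t. s \<in> S \<Longrightarrow> t \<in> S \<Longrightarrow> s \<noteq> t \<Longrightarrow> (s,t) \<in> Ind" using assms unfolding pre_cubic_def by auto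
  show "\<And>s t. s \<in> S \<Longrightarrow> t \<in> S \<Longrightarrow> s = inv t \<Longrightarrow> s = t"
    using p indD(9) by blast
qed

lemma pc_comm: assumes "pre_cubic G Gl Ind S" shows "commset (S \<union> (\<lambda>x. inv x) ` S)"
  unfolding commset_def
proof (intro conjI ballI)
  have Sc: "S \<subseteq> carrier G" using pcD[OF assms] by auto
  then show "S \<union> (\<lambda>x. inv x) ` S \<subseteq> carrier G" by auto
  have cm: "s \<otimes> t = t \<otimes> s" if "s \<in> S" "t \<in> S" for s t
    using pcD(4)[OF assms that] indD(5) by (cases "s = t") auto
  have cm2: "s \<otimes> inv t = inv t \<otimes> s" if "s \<in> S" "t \<in> S" for s t
  proof -
    have c: "s \<in> carrier G" "t \<in> carrier G" using that Sc by auto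
    have "s \<otimes> inv t = (inv t \<otimes> t) \<otimes> s \<otimes> inv t" using c by simp
    also have "\<dots> = inv t \<otimes> (t \<otimes> s) \<otimes> inv t" using c by (simp add: m_assoc)
    also have "\<dots> = inv t \<otimes> (s \<otimes> t) \<otimes> inv t" using cm[OF that] by simp
    also have "\<dots> = inv t \<otimes> s \<otimes> (t \<otimes> inv t)" using c by (simp add: m_assoc)
    also have "\<dots> = inv t \<otimes> s" using c by simp
    finally show ?thesis .
  qed
  fix x y assume x: "x \<in> S \<union> (\<lambda>x. inv x) ` S" and y: "y \<in> S \<union> (\<lambda>x. inv x) ` S"
  show "x \<otimes> y = y \<otimes> x"
  proof (cases "x \<in> S")
    case True
    show ?thesis
    proof (cases "y \<in> S")
      case True then show ?thesis using cm \<open>x \<in> S\<close> by blast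
    next
      case False
      then obtain t where "t \<in> S" "y = inv t" using y by blast
      then show ?thesis using cm2 \<open>x \<in> S\<close> by blast
    qed
  next
    case False
    then obtain s where s: "s \<in> S" "x = inv s" using x by blast
    show ?thesis
    proof (cases "y \<in> S")
      case True then show ?thesis using cm2 s by metis
    next
      case False
      then obtain t where t: "t \<in> S" "y = inv t" using y by blast
      have c: "s \<in> carrier G" "t \<in> carrier G" using s t Sc by auto
      have "inv s \<otimes> inv t = inv (t \<otimes> s)" using c by (simp add: inv_mult_group)
      also have "\<dots> = inv (s \<otimes> t)" using cm s t by metis
      also have "\<dots> = inv t \<otimes> inv s" using c by (simp add: inv_mult_group)
      finally show ?thesis using s t by simp
    qed
  qed
qed

lemma flip_prod:
  assumes pc: "pre_cubic G Gl Ind S" and T: "T \<subseteq> S" and U: "U \<subseteq> flip_set G T S"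
  defines "V \<equiv> (U \<inter> (S - T)) \<union> (T - (\<lambda>x. inv x) ` U)"
  shows "V \<subseteq> S" "glide_prod G U \<otimes> glide_prod G T = glide_prod G V"
    "flip_set G U (flip_set G T S) = flip_set G V S"
proof -
  let ?i = "\<lambda>x. inv x"
  define Q where "Q = S \<union> ?i ` S"
  have cQ: "commset Q" using pc_comm[OF pc] Q_def by simp
  have fS: "finite S" and Sc: "S \<subseteq> carrier G" using pcD[OF pc] by auto
  have si: "\<And>s t. s \<in> S \<Longrightarrow> t \<in> S \<Longrightarrow> s = inv t \<Longrightarrow> s = t" using pcD(5)[OF pc] by blast
  have ii: "\<And>x. x \<in> S \<Longrightarrow> inv (inv x) = x" using Sc by auto
  have Uf: "U \<subseteq> (S - T) \<union> ?i ` T" using U unfolding flip_set_def by auto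
  show VS: "V \<subseteq> S" unfolding V_def using T by auto
  define U1 where "U1 = U \<inter> (S - T)"
  define U2 where "U2 = T \<inter> ?i ` U"
  define R where "R = T - ?i ` U"
  have U12: "U = U1 \<union> ?i ` U2"
  proof
    show "U \<subseteq> U1 \<union> ?i ` U2"
    proof
      fix u assume u: "u \<in> U"
      show "u \<in> U1 \<union> ?i ` U2"
      proof (cases "u \<in> S - T")
        case True then show ?thesis using u U1_def by auto
      next
        case False
        then obtain t where t: "t \<in> T" "u = inv t" using u Uf by blast
        have "inv u = t" using t T ii by auto
        then have "t \<in> U2" unfolding U2_def using t(1) u by blast
        then show ?thesis using t by auto
      qed
    qed
  next
    show "U1 \<union> ?i ` U2 \<subseteq> U"
    proof
      fix x assume "x \<in> U1 \<union> ?i ` U2"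
      then show "x \<in> U"
      proof
        assume "x \<in> U1" then show ?thesis using U1_def by auto
      next
        assume "x \<in> ?i ` U2"
        then obtain t u where "t \<in> T" "u \<in> U" "t = inv u" "x = inv t" using U2_def by auto
        moreover have "u \<in> carrier G" using \<open>u \<in> U\<close> Uf T Sc by auto
        ultimately show ?thesis by simp
      qed
    qed
  qed
  have d1: "U1 \<inter> ?i ` U2 = {}"
  proof (rule ccontr)
    assume "U1 \<inter> ?i ` U2 \<noteq> {}"
    then obtain t where t: "t \<in> U2" "inv t \<in> U1" by blast
    then have "t \<in> S" "inv t \<in> S" "inv t \<notin> T" "t \<in> T" using U1_def U2_def T by auto
    then show False using si by metis
  qed
  have TU: "T = U2 \<union> R" "U2 \<inter> R = {}" using U2_def R_def by auto
  have VU: "V = U1 \<union> R" "U1 \<inter> R = {}" using V_def U1_def R_def by auto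
  have sub: "U1 \<subseteq> Q" "U2 \<subseteq> Q" "R \<subseteq> Q" "?i ` U2 \<subseteq> Q" "T \<subseteq> Q"
    using U1_def U2_def R_def T Q_def by auto
  have fin: "finite U1" "finite U2" "finite R" "finite (?i ` U2)" using fS U1_def U2_def R_def T
    by (auto intro: finite_subset)
  have cU2: "commset U2" using cQ sub commset_subset by blast
  have car: "U1 \<subseteq> carrier G" "U2 \<subseteq> carrier G" "R \<subseteq> carrier G"
    using sub cQ unfolding commset_def by auto
  have "glide_prod G U = glide_prod G U1 \<otimes> glide_prod G (?i ` U2)"
    using U12 gp_union[OF fin(1) fin(4) d1] commset_subset[OF cQ] sub by simp
  also have "\<dots> = glide_prod G U1 \<otimes> inv (glide_prod G U2)" using gp_inv[OF fin(2) cU2] by simp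
  finally have gU: "glide_prod G U = glide_prod G U1 \<otimes> inv (glide_prod G U2)" .
  have gT: "glide_prod G T = glide_prod G U2 \<otimes> glide_prod G R"
    using TU gp_union[OF fin(2) fin(3) TU(2)] commset_subset[OF cQ] sub by simp
  have gV: "glide_prod G V = glide_prod G U1 \<otimes> glide_prod G R"
    using VU gp_union[OF fin(1) fin(3) VU(2)] commset_subset[OF cQ] sub by simp
  have c3: "glide_prod G U1 \<in> carrier G" "glide_prod G U2 \<in> carrier G" "glide_prod G R \<in> carrier G"
    using fin car by auto
  show "glide_prod G U \<otimes> glide_prod G T = glide_prod G V"
    unfolding gU gT gV using c3 by (simp add: m_assoc)
  show "flip_set G U (flip_set G T S) = flip_set G V S"
  proof
    show "flip_set G U (flip_set G T S) \<subseteq> flip_set G V S"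
    proof
      fix x assume x: "x \<in> flip_set G U (flip_set G T S)"
      show "x \<in> flip_set G V S"
      proof (cases "x \<in> ?i ` U")
        case True
        then obtain u where u: "u \<in> U" "x = inv u" by blast
        show ?thesis
        proof (cases "u \<in> S - T")
          case True then have "u \<in> V" using u V_def by auto
          then show ?thesis using u unfolding flip_set_def by auto
        next
          case False
          then obtain t where t: "t \<in> T" "u = inv t" using u Uf by blast
          have xt: "x = t" using t u ii T by auto
          have "inv (inv t) = t" using t ii T by auto
          then have "t \<in> ?i ` U" using u t by (metis image_eqI)
          then have "t \<notin> V" using t V_def by auto
          then show ?thesis using xt t T unfolding flip_set_def by auto
        qed
      next
        case False
        then have x1: "x \<in> flip_set G T S" "x \<notin> U" using x unfolding flip_set_def by auto
        show ?thesis
        proof (cases "x \<in> S - T")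
          case True then have "x \<notin> V" using x1 V_def by auto
          then show ?thesis using True unfolding flip_set_def by auto
        next
          case False
          then obtain t where t: "t \<in> T" "x = inv t" using x1 unfolding flip_set_def by auto
          have "t \<notin> ?i ` U"
          proof
            assume "t \<in> ?i ` U"
            then obtain u where "u \<in> U" "t = inv u" by blast
            moreover have "u \<in> carrier G" using \<open>u \<in> U\<close> Uf T Sc by auto
            ultimately show False using t x1 by simp
          qed
          then have "t \<in> V" using t V_def by auto
          then show ?thesis using t unfolding flip_set_def by auto
        qed
      qed
    qed
  next
    show "flip_set G V S \<subseteq> flip_set G U (flip_set G T S)"
    proof
      fix x assume x: "x \<in> flip_set G V S"
      show "x \<in> flip_set G U (flip_set G T S)"
      proof (cases "x \<in> S - V")
        case True
        show ?thesis
        proof (cases "x \<in> T")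
          case True
          then have "x \<in> ?i ` U" using \<open>x \<in> S - V\<close> V_def by auto
          then show ?thesis unfolding flip_set_def by auto
        next
          case False
          then have "x \<in> S - T" "x \<notin> U" using \<open>x \<in> S - V\<close> V_def by auto
          then show ?thesis unfolding flip_set_def by auto
        qed
      next
        case False
        then obtain v where v: "v \<in> V" "x = inv v" using x unfolding flip_set_def by auto
        show ?thesis
        proof (cases "v \<in> U1")
          case True then have "v \<in> U" using U1_def by auto
          then show ?thesis using v unfolding flip_set_def by auto
        next
          case False
          then have vR: "v \<in> T" "v \<notin> ?i ` U" using v VU R_def by auto
          have "x \<notin> U"
          proof
            assume "x \<in> U"
            then have "inv x \<in> ?i ` U" by blast
            moreover have "inv x = v" using v vR T ii by auto
            ultimately show False using vR by simp
          qed
          moreover have "x \<in> flip_set G T S" using v vR unfolding flip_set_def by auto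
          ultimately show ?thesis unfolding flip_set_def by auto
        qed
      qed
    qed
  qed
qed


lemma flip_empty[simp]: "flip_set G {} S = S" unfolding flip_set_def by simp

lemma rel_refl: "fst c \<in> carrier G \<Longrightarrow> cube_rel G c c"
  unfolding cube_rel_def by (rule exI[of _ "{}"]) simp

lemma flip_fin_car: assumes "pre_cubic G Gl Ind S" "T \<subseteq> S"
  shows "finite (flip_set G T S)" "flip_set G T S \<subseteq> carrier G"
proof -
  have "finite S" "S \<subseteq> carrier G" using pcD[OF assms(1)] by auto
  moreover have "finite T" using assms(2) \<open>finite S\<close> finite_subset by blast
  ultimately show "finite (flip_set G T S)" "flip_set G T S \<subseteq> carrier G"
    using assms(2) unfolding flip_set_def by auto
qed

lemma rel_trans:
  assumes pc: "pre_cubic G Gl Ind (snd a)" and a: "fst a \<in> carrier G"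
    and ab: "cube_rel G a b" and bc: "cube_rel G b c"
  shows "cube_rel G a c"
proof -
  obtain T where T: "T \<subseteq> snd a" "fst b = glide_prod G T \<otimes> fst a" "snd b = flip_set G T (snd a)"
    using ab unfolding cube_rel_def by blast
  obtain U where U: "U \<subseteq> snd b" "fst c = glide_prod G U \<otimes> fst b" "snd c = flip_set G U (snd b)"
    using bc unfolding cube_rel_def by blast
  define V where "V = (U \<inter> (snd a - T)) \<union> (T - (\<lambda>x. inv x) ` U)"
  have U': "U \<subseteq> flip_set G T (snd a)" using U T by simp
  note fp = flip_prod[OF pc T(1) U', folded V_def]
  have fS: "finite (snd a)" "snd a \<subseteq> carrier G" using pcD[OF pc] by auto
  have cT: "finite T" "T \<subseteq> carrier G" using T(1) fS finite_subset by auto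
  have cU: "finite U" "U \<subseteq> carrier G" using U' flip_fin_car[OF pc T(1)] finite_subset by auto
  have "fst c = (glide_prod G U \<otimes> glide_prod G T) \<otimes> fst a"
    using U(2) T(2) cT cU a by (simp add: m_assoc)
  also have "\<dots> = glide_prod G V \<otimes> fst a" using fp(2) by simp
  finally have 1: "fst c = glide_prod G V \<otimes> fst a" .
  have 2: "snd c = flip_set G V (snd a)" using U(3) T(3) fp(3) by simp
  show ?thesis unfolding cube_rel_def using 1 2 fp(1) by blast
qed

lemma rel_sym:
  assumes pc: "pre_cubic G Gl Ind (snd a)" and a: "fst a \<in> carrier G"
    and ab: "cube_rel G a b"
  shows "cube_rel G b a"
proof -
  obtain T where T: "T \<subseteq> snd a" "fst b = glide_prod G T \<otimes> fst a" "snd b = flip_set G T (snd a)"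
    using ab unfolding cube_rel_def by blast
  define U where "U = (\<lambda>x. inv x) ` T"
  have U': "U \<subseteq> flip_set G T (snd a)" unfolding U_def flip_set_def by auto
  define V where "V = (U \<inter> (snd a - T)) \<union> (T - (\<lambda>x. inv x) ` U)"
  note fp = flip_prod[OF pc T(1) U', folded V_def]
  have fS: "finite (snd a)" "snd a \<subseteq> carrier G" using pcD[OF pc] by auto
  have V0: "V = {}"
  proof -
    have e1: "U \<inter> (snd a - T) = {}"
    proof (rule ccontr)
      assume "U \<inter> (snd a - T) \<noteq> {}"
      then obtain t where t: "t \<in> T" "inv t \<in> snd a" "inv t \<notin> T" unfolding U_def by blast
      have "t \<in> snd a" using t(1) T(1) by blast
      then have "inv t = t" using pcD(5)[OF pc, of "inv t" t] t(2) by blast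
      then show False using t by simp
    qed
    have "T \<subseteq> (\<lambda>x. inv x) ` U"
    proof
      fix t assume t: "t \<in> T"
      then have "t = inv (inv t)" using T(1) fS by auto
      moreover have "inv t \<in> U" unfolding U_def using t by (rule imageI)
      ultimately show "t \<in> (\<lambda>x. inv x) ` U" by (rule image_eqI)
    qed
    then have e2: "T - (\<lambda>x. inv x) ` U = {}" by (rule Diff_eq_empty_iff[THEN iffD2])
    show ?thesis unfolding V_def e1 e2 by simp
  qed
  have cT: "finite T" "T \<subseteq> carrier G" using T(1) fS finite_subset by auto
  have cU: "finite U" "U \<subseteq> carrier G" using U' flip_fin_car[OF pc T(1)] finite_subset by auto
  have "glide_prod G U \<otimes> fst b = (glide_prod G U \<otimes> glide_prod G T) \<otimes> fst a"
    using T(2) cT cU a by (simp add: m_assoc)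
  also have "\<dots> = fst a" using fp(2) V0 a by simp
  finally have 1: "fst a = glide_prod G U \<otimes> fst b" by simp
  have 2: "snd a = flip_set G U (snd b)" using T(3) fp(3) V0 by simp
  have 3: "U \<subseteq> snd b" using U' T(3) by simp
  show ?thesis unfolding cube_rel_def using 1 2 3 by blast
qed

lemma basedD: "based_cube G Gl Ind c \<Longrightarrow> fst c \<in> carrier G \<and> cubic G Gl Ind (snd c) \<and> pre_cubic G Gl Ind (snd c)"
  unfolding based_cube_def cubic_def by auto

lemma class_eq:
  assumes a: "based_cube G Gl Ind a" and b: "based_cube G Gl Ind b"
    and xa: "x \<in> cube_of G Gl Ind a" and xb: "x \<in> cube_of G Gl Ind b"
  shows "cube_of G Gl Ind a = cube_of G Gl Ind b"
proof -
  have ra: "cube_rel G a x" and rb: "cube_rel G b x" using xa xb unfolding cube_of_def by auto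
  have ba: "cube_rel G b a" using rel_trans[OF _ _ rb rel_sym[OF _ _ ra]] basedD[OF a] basedD[OF b] by blast
  have ab: "cube_rel G a b" using rel_trans[OF _ _ ra rel_sym[OF _ _ rb]] basedD[OF a] basedD[OF b] by blast
  show ?thesis
  proof
    show "cube_of G Gl Ind a \<subseteq> cube_of G Gl Ind b"
      unfolding cube_of_def using rel_trans[OF _ _ ba] basedD[OF b] by blast
    show "cube_of G Gl Ind b \<subseteq> cube_of G Gl Ind a"
      unfolding cube_of_def using rel_trans[OF _ _ ab] basedD[OF a] by blast
  qed
qed

lemma vert_sub:
  assumes c0: "based_cube G Gl Ind c0" and d: "cube_rel G c0 d"
  shows "cube_vertices G d \<subseteq> cube_vertices G c0"
proof
  have pc: "pre_cubic G Gl Ind (snd c0)" and A: "fst c0 \<in> carrier G" using basedD[OF c0] by auto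
  fix x assume "x \<in> cube_vertices G d"
  then obtain U where U: "U \<subseteq> snd d" "x = glide_prod G U \<otimes> fst d" unfolding cube_vertices_def by blast
  have "cube_rel G d (glide_prod G U \<otimes> fst d, flip_set G U (snd d))"
    unfolding cube_rel_def using U by auto
  from rel_trans[OF pc A d this] obtain V where "V \<subseteq> snd c0" "x = glide_prod G V \<otimes> fst c0"
    using U unfolding cube_rel_def by auto
  then show "x \<in> cube_vertices G c0" unfolding cube_vertices_def by blast
qed

lemma cubic_subset: "cubic G Gl Ind S \<Longrightarrow> S' \<subseteq> S \<Longrightarrow> cubic G Gl Ind S'"
  unfolding cubic_def pre_cubic_def by (meson Pow_mono inj_on_subset finite_subset subset_iff)

lemma cubic_single: "s \<in> Gl \<Longrightarrow> cubic G Gl Ind {s}"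
proof -
  assume s: "s \<in> Gl"
  have "s \<in> carrier G" "s \<noteq> \<one>" using s Gl_carrier Gl_ne1 by auto
  moreover have "Pow {s} = {{}, {s}}" by auto
  ultimately show ?thesis unfolding cubic_def pre_cubic_def inj_on_def using s by auto
qed

lemma subsets2: "X \<subseteq> {s,t} \<Longrightarrow> X = {} \<or> X = {s} \<or> X = {t} \<or> X = {s,t}" by auto

lemma cubic_pair: "(s,t) \<in> Ind \<Longrightarrow> cubic G Gl Ind {s,t}"
proof -
  assume st: "(s,t) \<in> Ind"
  note i = indD[OF st]
  have c: "s \<noteq> \<one>" "t \<noteq> \<one>" using i Gl_ne1 by auto
  have gp2: "glide_prod G {s,t} = s \<otimes> t" using gp_pair i by auto
  have n1: "s \<otimes> t \<noteq> s" "s \<otimes> t \<noteq> t" using c i by auto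
  have pc: "pre_cubic G Gl Ind {s,t}" unfolding pre_cubic_def using st i by auto
  have "inj_on (glide_prod G) (Pow {s,t})"
  proof (rule inj_onI)
    fix X Y assume xy: "X \<in> Pow {s,t}" "Y \<in> Pow {s,t}" and e: "glide_prod G X = glide_prod G Y"
    have X: "X = {} \<or> X = {s} \<or> X = {t} \<or> X = {s,t}" using subsets2[of X s t] xy by blast
    have Y: "Y = {} \<or> Y = {s} \<or> Y = {t} \<or> Y = {s,t}" using subsets2[of Y s t] xy by blast
    have v: "glide_prod G {} = \<one>" "glide_prod G {s} = s" "glide_prod G {t} = t" using i by auto
    have ne: "s \<noteq> t" "s \<otimes> t \<noteq> \<one>" "{s} \<noteq> {s,t}" "{t} \<noteq> {s,t}" "{s} \<noteq> {t}" using i by auto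
    show "X = Y" using X Y e v gp2 ne c n1
      by auto
  qed
  then show ?thesis using pc unfolding cubic_def by simp
qed


definition good :: "'g set \<Rightarrow> 'g \<Rightarrow> 'g set \<Rightarrow> bool" where
  "good D A S \<longleftrightarrow> cubic G Gl Ind S \<and> (\<forall>T\<subseteq>S. glide_prod G T \<otimes> A \<in> D)"

definition vx :: "'g \<Rightarrow> 'g \<Rightarrow> 'g bcube set \<times> 'g bcube" where
  "vx A s = (cube_of G Gl Ind (A,{s}), (A,{s}))"

lemma vx_inj: "inj (vx A)" unfolding vx_def by (rule injI) simp

lemma good_subset: "good D A S \<Longrightarrow> S' \<subseteq> S \<Longrightarrow> good D A S'"
  unfolding good_def using cubic_subset by blast

lemma good_fin: "good D A S \<Longrightarrow> finite S"
  unfolding good_def cubic_def pre_cubic_def by blast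

lemma in_own_cube: "based_cube G Gl Ind c \<Longrightarrow> c \<in> cube_of G Gl Ind c"
  unfolding cube_of_def using rel_refl basedD by blast

lemma LC:
  assumes Dc: "D \<subseteq> carrier G" and A: "A \<in> D"
  shows "c \<in> link_cells G Gl Ind D A \<longleftrightarrow>
     (\<exists>S. S \<noteq> {} \<and> good D A S \<and> c = (cube_of G Gl Ind (A,S),(A,S)))"
proof
  assume "c \<in> link_cells G Gl Ind D A"
  then obtain C S where c: "c = (C,(A,S))" "C \<in> glide_complex G Gl Ind D" "(A,S) \<in> C" "S \<noteq> {}"
    unfolding link_cells_def by blast
  then obtain c0 where c0: "C = cube_of G Gl Ind c0" "based_cube G Gl Ind c0" "cube_vertices G c0 \<subseteq> D"
    unfolding glide_complex_def by blast
  have b: "based_cube G Gl Ind (A,S)" "cube_rel G c0 (A,S)" using c(3) c0(1) unfolding cube_of_def by auto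
  have "C = cube_of G Gl Ind (A,S)"
    using class_eq[OF c0(2) b(1) _ in_own_cube[OF b(1)]] c(3) c0(1) by simp
  moreover have "cube_vertices G (A,S) \<subseteq> D" using vert_sub[OF c0(2) b(2)] c0(3) by blast
  then have "\<forall>T\<subseteq>S. glide_prod G T \<otimes> A \<in> D" unfolding cube_vertices_def by auto
  ultimately show "\<exists>S. S \<noteq> {} \<and> good D A S \<and> c = (cube_of G Gl Ind (A,S),(A,S))"
    using c b basedD unfolding good_def by fastforce
next
  assume "\<exists>S. S \<noteq> {} \<and> good D A S \<and> c = (cube_of G Gl Ind (A,S),(A,S))"
  then obtain S where S: "S \<noteq> {}" "good D A S" "c = (cube_of G Gl Ind (A,S),(A,S))" by blast
  have b: "based_cube G Gl Ind (A,S)" using S(2) A Dc unfolding good_def based_cube_def by auto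
  have "cube_vertices G (A,S) \<subseteq> D" using S(2) unfolding good_def cube_vertices_def by auto
  then have "cube_of G Gl Ind (A,S) \<in> glide_complex G Gl Ind D"
    unfolding glide_complex_def using b by blast
  then show "c \<in> link_cells G Gl Ind D A"
    unfolding link_cells_def using S in_own_cube[OF b] by blast
qed

lemma LC_intro:
  assumes Dc: "D \<subseteq> carrier G" and A: "A \<in> D" and "S \<noteq> {}" "good D A S"
  shows "(cube_of G Gl Ind (A,S),(A,S)) \<in> link_cells G Gl Ind D A"
  using assms LC[OF Dc A] by blast

lemma good_single:
  assumes "A \<in> D" "D \<subseteq> carrier G"
  shows "good D A {s} \<longleftrightarrow> s \<in> Gl \<and> s \<otimes> A \<in> D"
proof
  assume g: "good D A {s}"
  then have "s \<in> Gl" unfolding good_def cubic_def pre_cubic_def by auto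
  moreover have "glide_prod G {s} \<otimes> A \<in> D" using g unfolding good_def by blast
  ultimately show "s \<in> Gl \<and> s \<otimes> A \<in> D" using Gl_carrier by auto
next
  assume s: "s \<in> Gl \<and> s \<otimes> A \<in> D"
  have "T \<subseteq> {s} \<Longrightarrow> glide_prod G T \<otimes> A \<in> D" for T
    using s assms Gl_carrier by (cases "T = {}") (auto simp: subset_singleton_iff)
  then show "good D A {s}" unfolding good_def using cubic_single s by blast
qed

lemma good_pair:
  assumes "A \<in> D" "D \<subseteq> carrier G" "s \<noteq> t"
  shows "good D A {s,t} \<longleftrightarrow> (s,t) \<in> Ind \<and> s \<otimes> A \<in> D \<and> t \<otimes> A \<in> D \<and> s \<otimes> t \<otimes> A \<in> D"
proof
  assume g: "good D A {s,t}"
  then have st: "(s,t) \<in> Ind" unfolding good_def cubic_def pre_cubic_def using assms(3) by auto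
  note i = indD[OF st]
  have "glide_prod G {s} \<otimes> A \<in> D" "glide_prod G {t} \<otimes> A \<in> D" "glide_prod G {s,t} \<otimes> A \<in> D"
    using g unfolding good_def by blast+
  moreover have "glide_prod G {s,t} = s \<otimes> t" using gp_pair i by auto
  ultimately show "(s,t) \<in> Ind \<and> s \<otimes> A \<in> D \<and> t \<otimes> A \<in> D \<and> s \<otimes> t \<otimes> A \<in> D"
    using st i by auto
next
  assume h: "(s,t) \<in> Ind \<and> s \<otimes> A \<in> D \<and> t \<otimes> A \<in> D \<and> s \<otimes> t \<otimes> A \<in> D"
  note i = indD[OF conjunct1[OF h]]
  have gp2: "glide_prod G {s,t} = s \<otimes> t" using gp_pair i by auto
  have "T \<subseteq> {s,t} \<Longrightarrow> glide_prod G T \<otimes> A \<in> D" for T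
  proof -
    assume "T \<subseteq> {s,t}"
    then have "T = {} \<or> T = {s} \<or> T = {t} \<or> T = {s,t}" by (rule subsets2)
    then show ?thesis using h i gp2 assms by (elim disjE) auto
  qed
  then show "good D A {s,t}" unfolding good_def using cubic_pair h by blast
qed

lemma dim0:
  assumes Dc: "D \<subseteq> carrier G" and A: "A \<in> D"
    and v: "v \<in> link_cells G Gl Ind D A" "link_dim v = 0"
  shows "\<exists>s. v = vx A s \<and> good D A {s}"
proof -
  obtain S where S: "S \<noteq> {}" "good D A S" "v = (cube_of G Gl Ind (A,S),(A,S))" using v(1) LC[OF Dc A] by blast
  have "finite S" using good_fin S by blast
  moreover have "card S - 1 = 0" using v(2) S(3) unfolding link_dim_def by simp
  ultimately have "card S = 1" using S(1) by (simp add: card_gt_0_iff Suc_leI le_antisym)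
  then obtain s where "S = {s}" by (rule card_1_singletonE)
  then show ?thesis using S unfolding vx_def by blast
qed

lemma vertset:
  assumes Dc: "D \<subseteq> carrier G" and A: "A \<in> D" and S: "S \<noteq> {}" "good D A S"
  shows "link_vertset G Gl Ind D A (cube_of G Gl Ind (A,S),(A,S)) = vx A ` S"
proof
  show "link_vertset G Gl Ind D A (cube_of G Gl Ind (A,S),(A,S)) \<subseteq> vx A ` S"
  proof
    fix v assume "v \<in> link_vertset G Gl Ind D A (cube_of G Gl Ind (A,S),(A,S))"
    then have v: "v \<in> link_cells G Gl Ind D A" "link_dim v = 0"
      "link_face G Gl Ind v (cube_of G Gl Ind (A,S),(A,S))" unfolding link_vertset_def by auto
    obtain s where "v = vx A s" using dim0[OF Dc A v(1,2)] by blast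
    moreover then have "s \<in> S" using v(3) unfolding link_face_def vx_def by simp
    ultimately show "v \<in> vx A ` S" by blast
  qed
next
  show "vx A ` S \<subseteq> link_vertset G Gl Ind D A (cube_of G Gl Ind (A,S),(A,S))"
  proof
    fix v assume "v \<in> vx A ` S"
    then obtain s where s: "s \<in> S" "v = vx A s" by blast
    have "good D A {s}" using good_subset[OF S(2)] s by blast
    then have "v \<in> link_cells G Gl Ind D A" using LC[OF Dc A] s unfolding vx_def by blast
    moreover have "link_dim v = 0" using s unfolding link_dim_def vx_def by simp
    moreover have "link_face G Gl Ind v (cube_of G Gl Ind (A,S),(A,S))"
      using s unfolding link_face_def vx_def by simp
    ultimately show "v \<in> link_vertset G Gl Ind D A (cube_of G Gl Ind (A,S),(A,S))"
      unfolding link_vertset_def by blast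
  qed
qed


lemma simplicial:
  assumes Dc: "D \<subseteq> carrier G" and A: "A \<in> D"
  shows "link_simplicial G Gl Ind D A"
proof -
  let ?L = "link_cells G Gl Ind D A" and ?V = "link_vertset G Gl Ind D A"
  have LC': "\<And>c. c \<in> ?L \<Longrightarrow> \<exists>S. S \<noteq> {} \<and> good D A S \<and> c = (cube_of G Gl Ind (A,S),(A,S))"
    using LC[OF Dc A] by blast
  have 1: "\<forall>c\<in>?L. card (?V c) = link_dim c + 1"
  proof
    fix c assume "c \<in> ?L"
    then obtain S where S: "S \<noteq> {}" "good D A S" "c = (cube_of G Gl Ind (A,S),(A,S))" using LC' by blast
    have ci: "card (vx A ` S) = card S" by (rule card_image) (rule inj_on_subset[OF vx_inj], simp)
    have "card (?V c) = card S" using vertset[OF Dc A S(1,2)] S(3) ci by simp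
    moreover have "card S \<ge> 1" using good_fin[OF S(2)] S(1) by (simp add: Suc_leI card_gt_0_iff)
    ultimately show "card (?V c) = link_dim c + 1" using S(3) unfolding link_dim_def by simp
  qed
  have 2: "inj_on ?V ?L"
  proof (rule inj_onI)
    fix c d assume c: "c \<in> ?L" and d: "d \<in> ?L" and e: "?V c = ?V d"
    obtain S where S: "S \<noteq> {}" "good D A S" "c = (cube_of G Gl Ind (A,S),(A,S))" using LC' c by blast
    obtain S' where S': "S' \<noteq> {}" "good D A S'" "d = (cube_of G Gl Ind (A,S'),(A,S'))" using LC' d by blast
    have "vx A ` S = vx A ` S'" using e vertset[OF Dc A S(1,2)] vertset[OF Dc A S'(1,2)] S(3) S'(3) by simp
    then have "S = S'" using vx_inj by (simp add: inj_image_eq_iff)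
    then show "c = d" using S S' by simp
  qed
  have 3: "\<forall>c\<in>?L. \<forall>d\<in>?L. ?V c \<inter> ?V d \<noteq> {} \<longrightarrow>
          (\<exists>e\<in>?L. link_face G Gl Ind e c \<and> link_face G Gl Ind e d \<and> ?V e = ?V c \<inter> ?V d)"
  proof (intro ballI impI)
    fix c d assume c: "c \<in> ?L" and d: "d \<in> ?L" and ne: "?V c \<inter> ?V d \<noteq> {}"
    obtain S where S: "S \<noteq> {}" "good D A S" "c = (cube_of G Gl Ind (A,S),(A,S))" using LC' c by blast
    obtain S' where S': "S' \<noteq> {}" "good D A S'" "d = (cube_of G Gl Ind (A,S'),(A,S'))" using LC' d by blast
    have I: "?V c \<inter> ?V d = vx A ` (S \<inter> S')"
      using vertset[OF Dc A S(1,2)] vertset[OF Dc A S'(1,2)] S(3) S'(3) vx_inj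
      by (simp add: image_Int)
    then have ne': "S \<inter> S' \<noteq> {}" using ne by auto
    have g: "good D A (S \<inter> S')" using good_subset[OF S(2)] by blast
    define e where "e = (cube_of G Gl Ind (A,S \<inter> S'),(A,S \<inter> S'))"
    have "e \<in> ?L" unfolding e_def by (rule LC_intro[OF Dc A ne' g])
    moreover have "link_face G Gl Ind e c" "link_face G Gl Ind e d"
      using S(3) S'(3) e_def unfolding link_face_def by auto
    moreover have "?V e = ?V c \<inter> ?V d" using I vertset[OF Dc A ne' g] e_def by simp
    ultimately show "\<exists>e\<in>?L. link_face G Gl Ind e c \<and> link_face G Gl Ind e d \<and> ?V e = ?V c \<inter> ?V d"
      by blast
  qed
  show ?thesis unfolding link_simplicial_def Let_def by (intro conjI 1 2 3)
qed

definition FL :: "'g set \<Rightarrow> 'g \<Rightarrow> bool" where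
  "FL D A \<longleftrightarrow> (\<forall>S. finite S \<and> S \<noteq> {} \<and> (\<forall>s\<in>S. good D A {s}) \<and>
      (\<forall>s\<in>S. \<forall>t\<in>S. s \<noteq> t \<longrightarrow> good D A {s,t}) \<longrightarrow> good D A S)"

lemma FL_flag:
  assumes Dc: "D \<subseteq> carrier G" and A: "A \<in> D" and fl: "FL D A"
  shows "link_flag G Gl Ind D A"
  unfolding link_flag_def Let_def
proof (intro allI impI)
  let ?L = "link_cells G Gl Ind D A" and ?V = "link_vertset G Gl Ind D A"
  fix W assume W: "finite W \<and> W \<noteq> {} \<and> W \<subseteq> {v \<in> ?L. link_dim v = 0} \<and>
           (\<forall>v\<in>W. \<forall>w\<in>W. v \<noteq> w \<longrightarrow> (\<exists>e\<in>?L. ?V e = {v, w}))"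
  note fW = conjunct1[OF W]
  note neW = conjunct1[OF conjunct2[OF W]]
  note subW = conjunct1[OF conjunct2[OF conjunct2[OF W]]]
  note pw = conjunct2[OF conjunct2[OF conjunct2[OF W]], rule_format]
  define S where "S = vx A -` W"
  have WS: "W = vx A ` S"
  proof
    show "W \<subseteq> vx A ` S"
    proof
      fix v assume v: "v \<in> W"
      then have "v \<in> ?L" "link_dim v = 0" using subW by auto
      then obtain s where "v = vx A s" using dim0[OF Dc A] by blast
      then show "v \<in> vx A ` S" using v S_def by blast
    qed
    show "vx A ` S \<subseteq> W" using S_def by blast
  qed
  have fS: "finite S" unfolding S_def using fW vx_inj by (simp add: finite_vimageI)
  have neS: "S \<noteq> {}" using neW WS by blast
  have g1: "\<forall>s\<in>S. good D A {s}"
  proof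
    fix s assume "s \<in> S"
    then have "vx A s \<in> W" using WS by blast
    then have "vx A s \<in> ?L" "link_dim (vx A s) = 0" using subW by auto
    then obtain s' where "vx A s = vx A s'" "good D A {s'}" using dim0[OF Dc A] by blast
    then show "good D A {s}" using vx_inj by (metis injD)
  qed
  have g2: "\<forall>s\<in>S. \<forall>t\<in>S. s \<noteq> t \<longrightarrow> good D A {s,t}"
  proof (intro ballI impI)
    fix s t assume st: "s \<in> S" "t \<in> S" "s \<noteq> t"
    then have "vx A s \<noteq> vx A t" using vx_inj by (metis injD)
    moreover have "vx A s \<in> W" "vx A t \<in> W" using WS st by blast+
    ultimately obtain e where e: "e \<in> ?L" "?V e = {vx A s, vx A t}" using pw[of "vx A s" "vx A t"] by blast
    obtain S' where S': "S' \<noteq> {}" "good D A S'" "e = (cube_of G Gl Ind (A,S'),(A,S'))"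
      using e(1) LC[OF Dc A] by blast
    have "vx A ` S' = vx A ` {s,t}" using e(2) vertset[OF Dc A S'(1,2)] S'(3) by simp
    then have "S' = {s,t}" by (rule inj_image_eq_iff[OF vx_inj, THEN iffD1])
    then show "good D A {s,t}" using S' by simp
  qed
  have "good D A S" using fl fS neS g1 g2 unfolding FL_def by blast
  then have "(cube_of G Gl Ind (A,S),(A,S)) \<in> ?L" using LC_intro[OF Dc A neS] by blast
  moreover have "?V (cube_of G Gl Ind (A,S),(A,S)) = W" using vertset[OF Dc A neS \<open>good D A S\<close>] WS by simp
  ultimately show "\<exists>c\<in>?L. ?V c = W" by blast
qed

lemma flag_FL:
  assumes Dc: "D \<subseteq> carrier G" and A: "A \<in> D" and fl: "link_flag G Gl Ind D A"
  shows "FL D A"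
  unfolding FL_def
proof (intro allI impI)
  let ?L = "link_cells G Gl Ind D A" and ?V = "link_vertset G Gl Ind D A"
  fix S assume S: "finite S \<and> S \<noteq> {} \<and> (\<forall>s\<in>S. good D A {s}) \<and> (\<forall>s\<in>S. \<forall>t\<in>S. s \<noteq> t \<longrightarrow> good D A {s,t})"
  define W where "W = vx A ` S"
  have vL: "vx A s \<in> ?L" if "s \<in> S" for s
    unfolding vx_def by (rule LC_intro[OF Dc A]) (use that S in blast)+
  have W1: "W \<subseteq> {v \<in> ?L. link_dim v = 0}" using vL unfolding W_def link_dim_def vx_def by auto
  have W2: "\<forall>v\<in>W. \<forall>w\<in>W. v \<noteq> w \<longrightarrow> (\<exists>e\<in>?L. ?V e = {v, w})"
  proof (intro ballI impI)
    fix v w assume "v \<in> W" "w \<in> W" "v \<noteq> w"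
    then obtain s t where st: "s \<in> S" "t \<in> S" "v = vx A s" "w = vx A t" "s \<noteq> t" unfolding W_def by blast
    have g: "good D A {s,t}" using S st by blast
    have ne: "{s,t} \<noteq> {}" by simp
    have "(cube_of G Gl Ind (A,{s,t}),(A,{s,t})) \<in> ?L" using LC_intro[OF Dc A ne g] .
    moreover have "?V (cube_of G Gl Ind (A,{s,t}),(A,{s,t})) = {v,w}" using vertset[OF Dc A ne g] st by simp
    ultimately show "\<exists>e\<in>?L. ?V e = {v, w}" by blast
  qed
  have fW: "finite W" and neW: "W \<noteq> {}" using S W_def by auto
  have fl': "finite W \<and> W \<noteq> {} \<and> W \<subseteq> {v \<in> ?L. link_dim v = 0} \<and>
           (\<forall>v\<in>W. \<forall>w\<in>W. v \<noteq> w \<longrightarrow> (\<exists>e\<in>?L. ?V e = {v, w})) \<longrightarrow> (\<exists>c\<in>?L. ?V c = W)"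
    using fl unfolding link_flag_def Let_def by (rule spec)
  have "\<exists>c\<in>?L. ?V c = W" by (rule mp[OF fl']) (intro conjI fW neW W1 W2)
  then obtain c where c: "c \<in> ?L" "?V c = W" by blast
  obtain S' where S': "S' \<noteq> {}" "good D A S'" "c = (cube_of G Gl Ind (A,S'),(A,S'))"
    using c(1) LC[OF Dc A] by blast
  have "vx A ` S' = vx A ` S" using c(2) vertset[OF Dc A S'(1,2)] S'(3) W_def by simp
  then have "S' = S" using vx_inj by (simp add: inj_image_eq_iff)
  then show "good D A S" using S' by simp
qed


lemma npc_regular:
  assumes Dc: "D \<subseteq> carrier G" and fl: "\<forall>A\<in>D. FL D A"
  shows "regular G Gl Ind D"
  unfolding regular_def
proof (intro ballI allI impI)
  fix A S assume A: "A \<in> D" and h: "pre_cubic G Gl Ind S \<and> (\<forall>s\<in>S. s \<otimes> A \<in> D) \<and>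
        (\<forall>s\<in>S. \<forall>t\<in>S. s \<noteq> t \<longrightarrow> s \<otimes> t \<otimes> A \<in> D)"
  note pc = conjunct1[OF h]
  note h1 = conjunct1[OF conjunct2[OF h], rule_format]
  note h2 = conjunct2[OF conjunct2[OF h], rule_format]
  show "cubic G Gl Ind S"
  proof (cases "S = {}")
    case True then show ?thesis using pc unfolding cubic_def by simp
  next
    case False
    have g1: "\<forall>s\<in>S. good D A {s}" using good_single[OF A Dc] pcD(2)[OF pc] h1 by blast
    have g2: "\<forall>s\<in>S. \<forall>t\<in>S. s \<noteq> t \<longrightarrow> good D A {s,t}"
    proof (intro ballI impI)
      fix s t assume st: "s \<in> S" "t \<in> S" "s \<noteq> t"
      show "good D A {s,t}" using good_pair[OF A Dc st(3)] pcD(4)[OF pc st] h1 st h2 by blast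
    qed
    have "good D A S" using fl A pcD(1)[OF pc] False g1 g2 unfolding FL_def by blast
    then show ?thesis unfolding good_def by blast
  qed
qed

lemma npc_cube:
  assumes Dc: "D \<subseteq> carrier G" and fl: "\<forall>A\<in>D. FL D A"
  shows "cube_condition G Gl Ind D"
  unfolding cube_condition_def
proof (intro ballI allI impI)
  fix A s1 s2 s3 assume A: "A \<in> D" and h: "(s1, s2) \<in> Ind \<and> (s1, s3) \<in> Ind \<and> (s2, s3) \<in> Ind \<and>
        s1 \<otimes> A \<in> D \<and> s2 \<otimes> A \<in> D \<and> s3 \<otimes> A \<in> D \<and>
        s1 \<otimes> s2 \<otimes> A \<in> D \<and> s1 \<otimes> s3 \<otimes> A \<in> D \<and>
        s2 \<otimes> s3 \<otimes> A \<in> D"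
  have i: "(s1, s2) \<in> Ind" "(s1, s3) \<in> Ind" "(s2, s3) \<in> Ind" using h by blast+
  have d: "s1 \<otimes> A \<in> D" "s2 \<otimes> A \<in> D" "s3 \<otimes> A \<in> D"
        "s1 \<otimes> s2 \<otimes> A \<in> D" "s1 \<otimes> s3 \<otimes> A \<in> D" "s2 \<otimes> s3 \<otimes> A \<in> D"
    using h by blast+
  note i1 = indD[OF i(1)] and i2 = indD[OF i(2)] and i3 = indD[OF i(3)]
  have g12: "good D A {s1,s2}" using good_pair[OF A Dc i1(8)] i(1) d by blast
  have g13: "good D A {s1,s3}" using good_pair[OF A Dc i2(8)] i(2) d by blast
  have g23: "good D A {s2,s3}" using good_pair[OF A Dc i3(8)] i(3) d by blast
  have g21: "good D A {s2,s1}" using g12 by (simp add: insert_commute)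
  have g31: "good D A {s3,s1}" using g13 by (simp add: insert_commute)
  have g32: "good D A {s3,s2}" using g23 by (simp add: insert_commute)
  define S where "S = {s1,s2,s3}"
  have gs1: "good D A {s1}" "good D A {s2}" "good D A {s3}"
    using good_single[OF A Dc] i1(1,2) i2(2) d(1-3) by blast+
  have g1: "\<forall>s\<in>S. good D A {s}" unfolding S_def using gs1 by blast
  have g2: "\<forall>s\<in>S. \<forall>t\<in>S. s \<noteq> t \<longrightarrow> good D A {s,t}"
  proof (intro ballI impI)
    fix s t assume s: "s \<in> S" and t: "t \<in> S" and st: "s \<noteq> t"
    from s t st show "good D A {s,t}" unfolding S_def
      using g12 g13 g23 g21 g31 g32 by (elim insertE emptyE; simp)
  qed
  have FLA: "FL D A" using fl A by blast
  have fS: "finite S" "S \<noteq> {}" unfolding S_def by auto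
  have "good D A S" using FLA[unfolded FL_def, rule_format, of S] fS g1 g2 by blast
  then have gS: "glide_prod G S \<otimes> A \<in> D" and pc: "pre_cubic G Gl Ind S" unfolding good_def cubic_def by blast+
  have cs: "commset {s1,s2,s3}" using pc_comm[OF pc] commset_subset S_def by blast
  have dd: "distinct [s1,s2,s3]" using i1(8) i2(8) i3(8) by simp
  have "glide_prod G S = s1 \<otimes> s2 \<otimes> s3" unfolding S_def by (rule gp_triple[OF dd cs])
  then show "s1 \<otimes> s2 \<otimes> s3 \<otimes> A \<in> D" using gS by simp
qed

lemma allverts:
  assumes Dc: "D \<subseteq> carrier G" and A: "A \<in> D" and pc: "pre_cubic G Gl Ind S"
    and cc: "cube_condition G Gl Ind D"
    and small: "\<And>T. T \<subseteq> S \<Longrightarrow> card T \<le> 2 \<Longrightarrow> glide_prod G T \<otimes> A \<in> D"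
  shows "T \<subseteq> S \<Longrightarrow> glide_prod G T \<otimes> A \<in> D"
proof (induction "card T" arbitrary: T rule: less_induct)
  case less
  show ?case
  proof (cases "card T \<le> 2")
    case True then show ?thesis using small less.prems by blast
  next
    case False
    have fS: "finite S" and Sc: "S \<subseteq> carrier G" using pcD[OF pc] by auto
    have fT: "finite T" using less.prems fS finite_subset by blast
    have Ac: "A \<in> carrier G" using A Dc by blast
    have cS: "commset S" using pc_comm[OF pc] commset_subset by blast
    have "T \<noteq> {}" using False by auto
    then obtain s1 where s1: "s1 \<in> T" by blast
    have "card (T - {s1}) \<ge> 2" using False s1 fT by (simp add: card_Diff_singleton)
    then have "T - {s1} \<noteq> {}" by (cases "T - {s1} = {}") simp_all
    then obtain s2 where s2: "s2 \<in> T" "s2 \<noteq> s1" by blast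
    have "card (T - {s1,s2}) \<ge> 1" using False s1 s2 fT by (simp add: card_Diff_subset)
    then have "T - {s1,s2} \<noteq> {}" by (cases "T - {s1,s2} = {}") simp_all
    then obtain s3 where s3: "s3 \<in> T" "s3 \<noteq> s1" "s3 \<noteq> s2" by blast
    define X0 where "X0 = {s1,s2,s3}"
    define R where "R = T - X0"
    define B where "B = glide_prod G R \<otimes> A"
    have X0T: "X0 \<subseteq> T" using s1 s2 s3 X0_def by auto
    have X0S: "X0 \<subseteq> S" using X0T less.prems by (rule order_trans)
    have fX0: "finite X0" unfolding X0_def by simp
    have fR: "finite R" using fT R_def by auto
    have RS: "R \<subseteq> S" using R_def less.prems by auto
    have gRc: "glide_prod G R \<in> carrier G" using fR RS Sc by auto
    have cX0: "card X0 = 3" using s2 s3 X0_def by auto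
    have TXR: "T = X0 \<union> R" using X0T R_def by auto
    have dXR: "X0 \<inter> R = {}" using R_def by auto
    have cT: "card T = card X0 + card R" unfolding TXR using card_Un_disjoint[OF fX0 fR dXR] .
    have key: "glide_prod G (X \<union> R) \<otimes> A = glide_prod G X \<otimes> B" if X: "X \<subseteq> X0" for X
    proof -
      have fX: "finite X" using X fX0 finite_subset by auto
      have dis: "X \<inter> R = {}" using X R_def by auto
      have "X \<union> R \<subseteq> S" using X X0S RS by auto
      then have cXR: "commset (X \<union> R)" by (rule commset_subset[OF cS])
      have 1: "glide_prod G (X \<union> R) = glide_prod G X \<otimes> glide_prod G R"
        by (rule gp_union[OF fX fR dis cXR])
      have "X \<subseteq> carrier G" using X X0S Sc by auto
      then have "glide_prod G X \<in> carrier G" using fX by simp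
      then show ?thesis unfolding B_def 1 using gRc Ac by (simp add: m_assoc)
    qed
    have IH: "glide_prod G X \<otimes> B \<in> D" if X: "X \<subseteq> X0" "card X \<le> 2" for X
    proof -
      have fX: "finite X" using X fX0 finite_subset by auto
      have "X \<inter> R = {}" using X R_def by auto
      then have "card (X \<union> R) = card X + card R" using fX fR by (simp add: card_Un_disjoint)
      then have "card (X \<union> R) < card T" using cT cX0 X by simp
      moreover have "X \<union> R \<subseteq> S" using X X0S RS by auto
      ultimately have "glide_prod G (X \<union> R) \<otimes> A \<in> D" using less.hyps by blast
      then show ?thesis using key[OF X(1)] by simp
    qed
    have sS: "s1 \<in> S" "s2 \<in> S" "s3 \<in> S" using X0S X0_def by auto
    have i: "(s1,s2) \<in> Ind" "(s1,s3) \<in> Ind" "(s2,s3) \<in> Ind"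
      using pcD(4)[OF pc] sS s2 s3 by auto
    note i1 = indD[OF i(1)] and i2 = indD[OF i(2)] and i3 = indD[OF i(3)]
    have Bc: "B \<in> carrier G" unfolding B_def using gRc Ac by simp
    have B0: "B \<in> D" using IH[of "{}"] Bc by simp
    have sub1: "{s1} \<subseteq> X0" "{s2} \<subseteq> X0" "{s3} \<subseteq> X0" "{s1,s2} \<subseteq> X0" "{s1,s3} \<subseteq> X0" "{s2,s3} \<subseteq> X0"
      unfolding X0_def by auto
    have c1: "card {s1} \<le> 2" "card {s2} \<le> 2" "card {s3} \<le> 2" by simp_all
    have c2: "card {s1,s2} \<le> 2" "card {s1,s3} \<le> 2" "card {s2,s3} \<le> 2"
      by (simp_all add: card_insert_if)
    have B1: "s1 \<otimes> B \<in> D" "s2 \<otimes> B \<in> D" "s3 \<otimes> B \<in> D"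
      using IH[OF sub1(1) c1(1)] IH[OF sub1(2) c1(2)] IH[OF sub1(3) c1(3)] i1(10,11) i2(11) by simp_all
    have p: "glide_prod G {s1,s2} = s1 \<otimes> s2" "glide_prod G {s1,s3} = s1 \<otimes> s3"
      "glide_prod G {s2,s3} = s2 \<otimes> s3"
      using gp_pair[OF i1(8) i1(10) i1(11) i1(5)] gp_pair[OF i2(8) i2(10) i2(11) i2(5)]
        gp_pair[OF i3(8) i3(10) i3(11) i3(5)] by simp_all
    have B2: "s1 \<otimes> s2 \<otimes> B \<in> D" "s1 \<otimes> s3 \<otimes> B \<in> D" "s2 \<otimes> s3 \<otimes> B \<in> D"
      using IH[OF sub1(4) c2(1)] IH[OF sub1(5) c2(2)] IH[OF sub1(6) c2(3)] p by simp_all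
    have ccB: "(s1, s2) \<in> Ind \<and> (s1, s3) \<in> Ind \<and> (s2, s3) \<in> Ind \<and>
        s1 \<otimes> B \<in> D \<and> s2 \<otimes> B \<in> D \<and> s3 \<otimes> B \<in> D \<and>
        s1 \<otimes> s2 \<otimes> B \<in> D \<and> s1 \<otimes> s3 \<otimes> B \<in> D \<and>
        s2 \<otimes> s3 \<otimes> B \<in> D" by (intro conjI i B1 B2)
    have "s1 \<otimes> s2 \<otimes> s3 \<otimes> B \<in> D"
      using cc[unfolded cube_condition_def, rule_format, OF B0 ccB] .
    moreover have "glide_prod G X0 = s1 \<otimes> s2 \<otimes> s3"
    proof -
      have dd: "distinct [s1,s2,s3]" using i1(8) i2(8) i3(8) by simp
      have cs: "commset {s1,s2,s3}" using commset_subset[OF cS X0S] X0_def by simp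
      show ?thesis unfolding X0_def by (rule gp_triple[OF dd cs])
    qed
    ultimately show ?thesis using key[of X0] TXR by simp
  qed
qed

lemma reg_cube_FL:
  assumes Dc: "D \<subseteq> carrier G" and A: "A \<in> D" and reg: "regular G Gl Ind D"
    and cc: "cube_condition G Gl Ind D"
  shows "FL D A"
  unfolding FL_def
proof (intro allI impI)
  fix S assume S: "finite S \<and> S \<noteq> {} \<and> (\<forall>s\<in>S. good D A {s}) \<and> (\<forall>s\<in>S. \<forall>t\<in>S. s \<noteq> t \<longrightarrow> good D A {s,t})"
  note fS = conjunct1[OF S]
  note g1 = conjunct1[OF conjunct2[OF conjunct2[OF S]], rule_format]
  note g2 = conjunct2[OF conjunct2[OF conjunct2[OF S]], rule_format]
  have s1: "s \<in> Gl" "s \<otimes> A \<in> D" if "s \<in> S" for s using g1[OF that] good_single[OF A Dc] by auto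
  have s2: "(s,t) \<in> Ind" "s \<otimes> t \<otimes> A \<in> D" if "s \<in> S" "t \<in> S" "s \<noteq> t" for s t
    using g2[OF that] good_pair[OF A Dc that(3)] by auto
  have pc: "pre_cubic G Gl Ind S" unfolding pre_cubic_def using fS s1 s2 by blast
  have cub: "cubic G Gl Ind S"
    by (rule reg[unfolded regular_def, rule_format, OF A]) (intro conjI pc ballI impI s1 s2; assumption)
  have small: "glide_prod G T \<otimes> A \<in> D" if T: "T \<subseteq> S" "card T \<le> 2" for T
  proof -
    have fT: "finite T" using T fS finite_subset by blast
    consider "card T = 0" | "card T = 1" | "card T = 2" using T(2) by linarith
    then show ?thesis
    proof cases
      case 1 then have "T = {}" using fT by simp
      then show ?thesis using A Dc by auto
    next
      case 2 then obtain s where "T = {s}" by (rule card_1_singletonE)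
      then show ?thesis using g1 T unfolding good_def by auto
    next
      case 3 then obtain s t where "T = {s,t}" "s \<noteq> t" by (meson card_2_iff)
      then show ?thesis using g2 T unfolding good_def by auto
    qed
  qed
  have "\<forall>T\<subseteq>S. glide_prod G T \<otimes> A \<in> D" using allverts[OF Dc A pc cc small] by blast
  then show "good D A S" using cub unfolding good_def by blast
qed

end

theorem theorem4p4:
  fixes G :: "('g, 'b) monoid_scheme" and Gl :: "'g set" and Ind :: "('g \<times> 'g) set"
    and D :: "'g set"
  assumes "gliding_system G Gl Ind"
    and "D \<subseteq> carrier G"
  shows "nonpositively_curved G Gl Ind D \<longleftrightarrow> regular G Gl Ind D \<and> cube_condition G Gl Ind D"
proof -
  interpret glsys G Gl Ind
    using assms(1) unfolding glsys_def glsys_axioms_def gliding_system_def by blast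
  have 1: "nonpositively_curved G Gl Ind D \<longleftrightarrow> (\<forall>A\<in>D. FL D A)"
    unfolding nonpositively_curved_def
  proof
    assume h: "\<forall>A\<in>D. link_simplicial G Gl Ind D A \<and> link_flag G Gl Ind D A"
    show "\<forall>A\<in>D. FL D A"
    proof
      fix A assume A: "A \<in> D"
      then have "link_flag G Gl Ind D A" using h by blast
      then show "FL D A" by (rule flag_FL[OF assms(2) A])
    qed
  next
    assume h: "\<forall>A\<in>D. FL D A"
    show "\<forall>A\<in>D. link_simplicial G Gl Ind D A \<and> link_flag G Gl Ind D A"
    proof
      fix A assume A: "A \<in> D"
      then have "FL D A" using h by blast
      then show "link_simplicial G Gl Ind D A \<and> link_flag G Gl Ind D A"
        using simplicial[OF assms(2) A] FL_flag[OF assms(2) A] by blast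
    qed
  qed
  have 2: "(\<forall>A\<in>D. FL D A) \<longleftrightarrow> regular G Gl Ind D \<and> cube_condition G Gl Ind D"
  proof
    assume h: "\<forall>A\<in>D. FL D A"
    show "regular G Gl Ind D \<and> cube_condition G Gl Ind D"
      using npc_regular[OF assms(2) h] npc_cube[OF assms(2) h] by blast
  next
    assume h: "regular G Gl Ind D \<and> cube_condition G Gl Ind D"
    show "\<forall>A\<in>D. FL D A"
    proof
      fix A assume A: "A \<in> D"
      show "FL D A" using reg_cube_FL[OF assms(2) A] h by blast
    qed
  qed
  show ?thesis using 1 2 by blast
qed

end
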